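(* Let $x_0,\dots,x_{T-1}\stackrel{\text{i.i.d.}}{\sim}\mathcal{N}(0,I_d)$ and $\phi_t=\operatorname{svec}(x_tx_t^\top)$. There is a universal constant $c>0$ such that for every fixed unit vector $v\in\mathbb{R}^{d(d+1)/2}$ and every $\delta\in(0,1)$, $$\mathbb{P}\left(\sum_{t=0}^{T-1}(v^\top\phi_t)^2\ge2T-\sqrt{cTd^2\log(1/\delta)}\right)\ge1-\delta.$$
   Context: $\operatorname{svec}$ maps a symmetric $d\times d$ matrix $M$ to the vector in $\mathbb{R}^{d(d+1)/2}$ listing its diagonal entries $M_{ii}$ and its entries $\sqrt{2}\,M_{ij}$ for $i<j$ (in a fixed order), so that $\|\operatorname{svec}(M)\|_2=\|M\|_F$. *)

theory Defs
  imports "HOL-Probability.Probability"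
begin

definition std_gauss :: "real measure" where
  "std_gauss = density lborel std_normal_density"

text \<open>Law of x_0,...,x_{T-1} i.i.d. N(0,I_d): x t i is coordinate i of x_t.\<close>
definition gauss_sample :: "nat \<Rightarrow> nat \<Rightarrow> (nat \<Rightarrow> nat \<Rightarrow> real) measure" where
  "gauss_sample T d = PiM {..<T} (\<lambda>_. PiM {..<d} (\<lambda>_. std_gauss))"

definition svec_idx :: "nat \<Rightarrow> (nat \<times> nat) set" where
  "svec_idx d = {(i, j). i \<le> j \<and> j < d}"

definition svec :: "(nat \<Rightarrow> nat \<Rightarrow> real) \<Rightarrow> nat \<times> nat \<Rightarrow> real" where
  "svec M p = (if fst p = snd p then M (fst p) (snd p) else sqrt 2 * M (fst p) (snd p))"

definition outer :: "(nat \<Rightarrow> real) \<Rightarrow> nat \<Rightarrow> nat \<Rightarrow> real" where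
  "outer x = (\<lambda>i j. x i * x j)"

end

theory Submission
  imports Defs
begin

lemma prob_G: "prob_space std_gauss"
  unfolding std_gauss_def by (rule prob_space_normal_density) simp

interpretation G: prob_space std_gauss by (rule prob_G)

lemma G_space[simp]: "space std_gauss = UNIV"
  unfolding std_gauss_def by simp

lemma G_sets[simp]: "sets std_gauss = sets borel"
  unfolding std_gauss_def by simp

lemma G_meas[measurable]: "f \<in> borel_measurable borel \<Longrightarrow> f \<in> borel_measurable std_gauss"
  by (simp add: measurable_def)

lemma G_int_pow: "integrable std_gauss (\<lambda>y. y ^ k)"
  unfolding std_gauss_def
  by (subst integrable_density) (auto simp: integrable_std_normal_moment)

lemma G_mom: "integral\<^sup>L std_gauss (\<lambda>y. y ^ k) = integral\<^sup>L lborel (\<lambda>x. std_normal_density x * x ^ k)"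
  unfolding std_gauss_def
  by (subst integral_density) auto

lemma G_mom_even: "integral\<^sup>L std_gauss (\<lambda>y. y ^ (2*k)) = fact (2 * k) / (2^k * fact k)"
  by (simp only: G_mom integral_std_normal_moment_even)

lemma G_mom_odd: "integral\<^sup>L std_gauss (\<lambda>y. y ^ (2*k+1)) = 0"
  by (simp only: G_mom integral_std_normal_moment_odd)

lemma G_hb: "has_bochner_integral std_gauss (\<lambda>y. y ^ k) (integral\<^sup>L std_gauss (\<lambda>y. y ^ k))"
  by (rule has_bochner_integral_integrable[OF G_int_pow])

lemma G_m0: "integral\<^sup>L std_gauss (\<lambda>y. 1::real) = 1"
  using G.prob_space by simp
lemma G_m1: "integral\<^sup>L std_gauss (\<lambda>y. y) = 0"
  using G_mom_odd[of 0] by simp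
lemma G_m2: "integral\<^sup>L std_gauss (\<lambda>y. y^2) = 1"
  using G_mom_even[of 1] by simp
lemma G_m3: "integral\<^sup>L std_gauss (\<lambda>y. y^3) = 0"
  using G_mom_odd[of 1] by (simp add: numeral_eq_Suc)
lemma G_m4: "integral\<^sup>L std_gauss (\<lambda>y. y^4) = 3"
  using G_mom_even[of 2] by (simp add: fact_numeral)
lemma G_m8: "integral\<^sup>L std_gauss (\<lambda>y. y^8) = 105"
  using G_mom_even[of 4] by (simp add: fact_numeral)

lemma G_poly4:
  "integral\<^sup>L std_gauss (\<lambda>y. a0 + a1 * y + a2 * y^2 + a3 * y^3 + a4 * y^4) = a0 + a2 + 3 * a4"
proof -
  have "has_bochner_integral std_gauss (\<lambda>y. a0 * y^0 + a1 * y^1 + a2 * y^2 + a3 * y^3 + a4 * y^4)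
     (a0 * 1 + a1 * 0 + a2 * 1 + a3 * 0 + a4 * 3)"
  proof -
    have h0: "has_bochner_integral std_gauss (\<lambda>y. y^0) (1::real)"
      using G_hb[of 0] G_m0 by simp
    have h1: "has_bochner_integral std_gauss (\<lambda>y. y^1) (0::real)"
      using G_hb[of 1] G_m1 by simp
    have h2: "has_bochner_integral std_gauss (\<lambda>y. y^2) (1::real)"
      using G_hb[of 2] G_m2 by simp
    have h3: "has_bochner_integral std_gauss (\<lambda>y. y^3) (0::real)"
      using G_hb[of 3] G_m3 by simp
    have h4: "has_bochner_integral std_gauss (\<lambda>y. y^4) (3::real)"
      using G_hb[of 4] G_m4 by simp
    show ?thesis
      by (intro has_bochner_integral_add has_bochner_integral_mult_right h0 h1 h2 h3 h4)
  qed
  then show ?thesis by (simp add: has_bochner_integral_integral_eq)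
qed

interpretation PG: product_sigma_finite "\<lambda>_::nat. std_gauss"
  by unfold_locales

definition Gn :: "nat \<Rightarrow> (nat \<Rightarrow> real) measure" where
  "Gn n = PiM {..<n} (\<lambda>_. std_gauss)"

lemma prob_Gn: "prob_space (Gn n)"
  unfolding Gn_def by (rule prob_space_PiM) (rule prob_G)

definition mom :: "nat \<Rightarrow> ((nat \<Rightarrow> real) \<Rightarrow> real) \<Rightarrow> bool" where
  "mom n f \<longleftrightarrow> f \<in> borel_measurable (Gn n) \<and> (\<forall>k. integrable (Gn n) (\<lambda>x. \<bar>f x\<bar> ^ k))"

lemma mom_integrable: "mom n f \<Longrightarrow> integrable (Gn n) f"
proof -
  assume m: "mom n f"
  then have "integrable (Gn n) (\<lambda>x. \<bar>f x\<bar> ^ 1)" and "f \<in> borel_measurable (Gn n)"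
    unfolding mom_def by blast+
  then have "integrable (Gn n) (\<lambda>x. \<bar>f x\<bar>)" and "f \<in> borel_measurable (Gn n)"
    unfolding power_one_right by blast+
  then show ?thesis using integrable_abs_iff[of f "Gn n"] by blast
qed

lemma mom_meas: "mom n f \<Longrightarrow> f \<in> borel_measurable (Gn n)"
  unfolding mom_def by blast

lemma mom_const: "mom n (\<lambda>_. c)"
proof -
  interpret prob_space "Gn n" by (rule prob_Gn)
  show ?thesis unfolding mom_def
    by (intro conjI allI borel_measurable_const integrable_const)
qed

lemma Gn_coord_meas: assumes "i < n" shows "(\<lambda>x. x i) \<in> borel_measurable (Gn n)"
proof -
  have "(\<lambda>x. x i) \<in> measurable (Gn n) std_gauss"
    unfolding Gn_def using assms by (intro measurable_component_singleton) auto
  then show ?thesis using measurable_cong_sets[OF refl G_sets] by blast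
qed

lemma mom_coord: assumes "i < n" shows "mom n (\<lambda>x. x i)"
proof -
  have meas: "(\<lambda>x. x i) \<in> borel_measurable (Gn n)" using assms by (rule Gn_coord_meas)
  have "integrable (Gn n) (\<lambda>x. \<bar>x i\<bar> ^ k)" for k
  proof -
    define f where "f = (\<lambda>j (y::real). if j = i then \<bar>y\<bar> ^ k else 1)"
    have fi: "integrable std_gauss (f j)" for j
    proof -
      have "integrable std_gauss (\<lambda>y. \<bar>y ^ k\<bar>)"
        using G_int_pow[of k] by (rule integrable_abs)
      then show ?thesis unfolding f_def by (cases "j = i") (simp_all add: power_abs)
    qed
    have int: "integrable (Gn n) (\<lambda>x. \<Prod>j\<in>{..<n}. f j (x j))"
      unfolding Gn_def by (rule PG.product_integrable_prod) (rule finite_lessThan, rule fi)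
    have "(\<Prod>j\<in>{..<n}. f j (x j)) = \<bar>x i\<bar> ^ k" for x
    proof -
      have "(\<Prod>j\<in>{..<n}. f j (x j)) = f i (x i) * (\<Prod>j\<in>{..<n} - {i}. f j (x j))"
        by (rule prod.remove) (simp_all add: assms)
      also have "(\<Prod>j\<in>{..<n} - {i}. f j (x j)) = 1" by (rule prod.neutral) (auto simp: f_def)
      moreover have "f i (x i) = \<bar>x i\<bar> ^ k" by (simp add: f_def)
      ultimately show ?thesis by simp
    qed
    then have "(\<lambda>x. \<Prod>j\<in>{..<n}. f j (x j)) = (\<lambda>x. \<bar>x i\<bar> ^ k)" by (rule ext)
    with int show ?thesis by (simp only:)
  qed
  then show ?thesis using meas unfolding mom_def by blast
qed



lemma mom_add: assumes "mom n f" "mom n g" shows "mom n (\<lambda>x. f x + g x)"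
proof -
  have mf: "f \<in> borel_measurable (Gn n)" and mg: "g \<in> borel_measurable (Gn n)"
    using assms unfolding mom_def by blast+
  have "integrable (Gn n) (\<lambda>x. \<bar>f x + g x\<bar> ^ k)" for k
  proof -
    have i1: "integrable (Gn n) (\<lambda>x. 2^k * (\<bar>f x\<bar> ^ k + \<bar>g x\<bar> ^ k))"
    proof -
      have "integrable (Gn n) (\<lambda>x. \<bar>f x\<bar> ^ k)" "integrable (Gn n) (\<lambda>x. \<bar>g x\<bar> ^ k)"
        using assms unfolding mom_def by blast+
      then show ?thesis by (intro integrable_mult_right Bochner_Integration.integrable_add)
    qed
    have i2: "(\<lambda>x. \<bar>f x + g x\<bar> ^ k) \<in> borel_measurable (Gn n)"
      by (intro borel_measurable_power borel_measurable_abs borel_measurable_add mf mg)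
    have i3: "AE x in Gn n. norm (\<bar>f x + g x\<bar> ^ k) \<le> norm (2^k * (\<bar>f x\<bar> ^ k + \<bar>g x\<bar> ^ k))"
    proof (rule AE_I2)
      fix x
      have "\<bar>f x + g x\<bar> ^ k \<le> (2 * max \<bar>f x\<bar> \<bar>g x\<bar>) ^ k"
        by (rule power_mono) auto
      also have "\<dots> = 2^k * max \<bar>f x\<bar> \<bar>g x\<bar> ^ k" by (simp add: power_mult_distrib)
      also have "max \<bar>f x\<bar> \<bar>g x\<bar> ^ k \<le> \<bar>f x\<bar> ^ k + \<bar>g x\<bar> ^ k"
        by (cases "\<bar>f x\<bar> \<le> \<bar>g x\<bar>") (auto simp: max_def)
      finally show "norm (\<bar>f x + g x\<bar> ^ k) \<le> norm (2^k * (\<bar>f x\<bar> ^ k + \<bar>g x\<bar> ^ k))"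
        by simp
    qed
    show ?thesis by (rule Bochner_Integration.integrable_bound[OF i1 i2 i3])
  qed
  moreover have "(\<lambda>x. f x + g x) \<in> borel_measurable (Gn n)" by (intro borel_measurable_add mf mg)
  ultimately show ?thesis unfolding mom_def by blast
qed

lemma mom_mult: assumes "mom n f" "mom n g" shows "mom n (\<lambda>x. f x * g x)"
proof -
  have mf: "f \<in> borel_measurable (Gn n)" and mg: "g \<in> borel_measurable (Gn n)"
    using assms unfolding mom_def by blast+
  have "integrable (Gn n) (\<lambda>x. \<bar>f x * g x\<bar> ^ k)" for k
  proof -
    have i1: "integrable (Gn n) (\<lambda>x. \<bar>f x\<bar> ^ (2*k) + \<bar>g x\<bar> ^ (2*k))"
    proof -
      have "integrable (Gn n) (\<lambda>x. \<bar>f x\<bar> ^ (2*k))" "integrable (Gn n) (\<lambda>x. \<bar>g x\<bar> ^ (2*k))"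
        using assms unfolding mom_def by blast+
      then show ?thesis by (rule Bochner_Integration.integrable_add)
    qed
    have i2: "(\<lambda>x. \<bar>f x * g x\<bar> ^ k) \<in> borel_measurable (Gn n)"
      by (intro borel_measurable_power borel_measurable_abs borel_measurable_times mf mg)
    have i3: "AE x in Gn n. norm (\<bar>f x * g x\<bar> ^ k) \<le> norm (\<bar>f x\<bar> ^ (2*k) + \<bar>g x\<bar> ^ (2*k))"
    proof (rule AE_I2)
      fix x
      have "\<bar>f x * g x\<bar> ^ k = \<bar>f x\<bar> ^ k * \<bar>g x\<bar> ^ k" by (simp add: abs_mult power_mult_distrib)
      also have "\<dots> \<le> (\<bar>f x\<bar> ^ k)^2 + (\<bar>g x\<bar> ^ k)^2"
        using sum_squares_bound[of "\<bar>f x\<bar> ^ k" "\<bar>g x\<bar> ^ k"]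
          mult_nonneg_nonneg[OF zero_le_power[OF abs_ge_zero] zero_le_power[OF abs_ge_zero], of "f x" k "g x" k]
        by linarith
      also have "\<dots> = \<bar>f x\<bar> ^ (2*k) + \<bar>g x\<bar> ^ (2*k)" by (simp add: power_mult[symmetric] mult.commute)
      finally show "norm (\<bar>f x * g x\<bar> ^ k) \<le> norm (\<bar>f x\<bar> ^ (2*k) + \<bar>g x\<bar> ^ (2*k))"
        by simp
    qed
    show ?thesis by (rule Bochner_Integration.integrable_bound[OF i1 i2 i3])
  qed
  moreover have "(\<lambda>x. f x * g x) \<in> borel_measurable (Gn n)" by (intro borel_measurable_times mf mg)
  ultimately show ?thesis unfolding mom_def by blast
qed

lemma mom_sum: "(\<And>i. i \<in> S \<Longrightarrow> mom n (f i)) \<Longrightarrow> mom n (\<lambda>x. \<Sum>i\<in>S. f i x)"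
proof (induction S rule: infinite_finite_induct)
  case (infinite A) then show ?case by (simp add: mom_const)
next
  case empty then show ?case by (simp add: mom_const)
next
  case (insert a A) then show ?case by (simp add: mom_add)
qed

lemma mom_pow: assumes "mom n f" shows "mom n (\<lambda>x. f x ^ k)"
proof (induction k)
  case 0 show ?case using mom_const[of n 1] by simp
next
  case (Suc k) show ?case using mom_mult[OF assms Suc.IH] by (simp only: power_Suc)
qed

lemma mom_cmult: assumes "mom n f" shows "mom n (\<lambda>x. c * f x)"
  by (rule mom_mult[OF mom_const assms])

lemma mom_diff: "mom n f \<Longrightarrow> mom n g \<Longrightarrow> mom n (\<lambda>x. f x - g x)"
  using mom_add[of n f "\<lambda>x. (-1) * g x"] mom_cmult[of n g "-1"] by simp

lemmas mom_intros = mom_const mom_coord mom_add mom_mult mom_sum mom_pow mom_cmult mom_diff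

lemma Gn_split:
  fixes f :: "(nat \<Rightarrow> real) \<Rightarrow> real"
  assumes "integrable (Gn (Suc n)) f"
  shows "integral\<^sup>L (Gn (Suc n)) f = (\<integral>x. (\<integral>y. f (x(n:=y)) \<partial>std_gauss) \<partial>Gn n)"
proof -
  have e: "{..<Suc n} = insert n {..<n}" by auto
  have "integrable (Pi\<^sub>M (insert n {..<n}) (\<lambda>_. std_gauss)) f"
    using assms unfolding Gn_def e .
  from PG.product_integral_insert[of "{..<n}" n f, OF finite_lessThan _ this]
  show ?thesis unfolding Gn_def e by simp
qed

lemma Gn_step:
  assumes F: "mom (Suc n) F"
    and a: "mom n a0" "mom n a1" "mom n a2" "mom n a3" "mom n a4"
    and eq: "\<And>x y. F (x(n:=y)) = a0 x + a1 x * y + a2 x * y^2 + a3 x * y^3 + a4 x * y^4"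
  shows "integral\<^sup>L (Gn (Suc n)) F = integral\<^sup>L (Gn n) a0 + integral\<^sup>L (Gn n) a2 + 3 * integral\<^sup>L (Gn n) a4"
proof -
  have "integral\<^sup>L (Gn (Suc n)) F = (\<integral>x. (\<integral>y. F (x(n:=y)) \<partial>std_gauss) \<partial>Gn n)"
    by (rule Gn_split[OF mom_integrable[OF F]])
  also have "\<dots> = (\<integral>x. a0 x + a2 x + 3 * a4 x \<partial>Gn n)"
    unfolding eq G_poly4 ..
  also have "\<dots> = integral\<^sup>L (Gn n) a0 + integral\<^sup>L (Gn n) a2 + 3 * integral\<^sup>L (Gn n) a4"
    using mom_integrable[OF a(1)] mom_integrable[OF a(3)] mom_integrable[OF a(5)]
    by (simp add: Bochner_Integration.integral_add)
  finally show ?thesis .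
qed

definition Lf :: "(nat \<Rightarrow> real) \<Rightarrow> nat \<Rightarrow> (nat \<Rightarrow> real) \<Rightarrow> real" where
  "Lf c n x = (\<Sum>i<n. c i * x i)"
definition On :: "(nat \<Rightarrow> nat \<Rightarrow> real) \<Rightarrow> nat \<Rightarrow> (nat \<Rightarrow> real) \<Rightarrow> real" where
  "On b n x = (\<Sum>j<n. Lf (\<lambda>i. b i j) j x * x j)"
definition Dn :: "(nat \<Rightarrow> real) \<Rightarrow> nat \<Rightarrow> (nat \<Rightarrow> real) \<Rightarrow> real" where
  "Dn a n x = (\<Sum>i<n. a i * (x i)^2)"
definition Qn :: "(nat \<Rightarrow> real) \<Rightarrow> (nat \<Rightarrow> nat \<Rightarrow> real) \<Rightarrow> nat \<Rightarrow> (nat \<Rightarrow> real) \<Rightarrow> real" where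
  "Qn a b n x = Dn a n x + On b n x"

lemma Lf_Suc: "Lf c (Suc n) x = Lf c n x + c n * x n" by (simp add: Lf_def)
lemma On_Suc: "On b (Suc n) x = On b n x + Lf (\<lambda>i. b i n) n x * x n" by (simp add: On_def)
lemma Dn_Suc: "Dn a (Suc n) x = Dn a n x + a n * (x n)^2" by (simp add: Dn_def)

lemma Lf_upd: "n \<le> m \<Longrightarrow> Lf c n (x(m:=y)) = Lf c n x"
  unfolding Lf_def by (intro sum.cong) auto
lemma On_upd: "n \<le> m \<Longrightarrow> On b n (x(m:=y)) = On b n x"
  unfolding On_def by (intro sum.cong) (auto simp: Lf_upd)
lemma Dn_upd: "n \<le> m \<Longrightarrow> Dn a n (x(m:=y)) = Dn a n x"
  unfolding Dn_def by (intro sum.cong) auto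

lemma mom_Lf: "m \<le> n \<Longrightarrow> mom n (Lf c m)"
proof -
  assume "m \<le> n"
  have "mom n (\<lambda>x. \<Sum>i<m. c i * x i)"
    using \<open>m \<le> n\<close> by (intro mom_sum mom_cmult mom_coord) auto
  then show ?thesis unfolding Lf_def[abs_def] .
qed

lemma mom_On: "m \<le> n \<Longrightarrow> mom n (On b m)"
proof -
  assume "m \<le> n"
  have "mom n (\<lambda>x. \<Sum>j<m. Lf (\<lambda>i. b i j) j x * x j)"
    using \<open>m \<le> n\<close> by (intro mom_sum mom_mult mom_coord mom_Lf) auto
  then show ?thesis unfolding On_def[abs_def] .
qed

lemma mom_Dn: "m \<le> n \<Longrightarrow> mom n (Dn a m)"
proof -
  assume "m \<le> n"
  have "mom n (\<lambda>x. \<Sum>i<m. a i * (x i)^2)"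
    using \<open>m \<le> n\<close> by (intro mom_sum mom_cmult mom_pow mom_coord) auto
  then show ?thesis unfolding Dn_def[abs_def] .
qed

lemma mom_Qn: "m \<le> n \<Longrightarrow> mom n (Qn a b m)"
proof -
  assume "m \<le> n"
  have "mom n (\<lambda>x. Dn a m x + On b m x)"
    using \<open>m \<le> n\<close> by (intro mom_add mom_Dn mom_On)
  then show ?thesis unfolding Qn_def[abs_def] .
qed

lemma Gn_measure_space[simp]: "measure (Gn n) (space (Gn n)) = 1"
  using prob_space.prob_space[OF prob_Gn] .

lemma Gn_const: "integral\<^sup>L (Gn n) (\<lambda>x. c) = (c::real)"
  by simp

lemma EL2: "integral\<^sup>L (Gn n) (\<lambda>x. (Lf c n x)^2) = (\<Sum>i<n. (c i)^2)"
proof (induction n)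
  case 0 then show ?case by (simp add: Lf_def Gn_const)
next
  case (Suc n)
  have "integral\<^sup>L (Gn (Suc n)) (\<lambda>x. (Lf c (Suc n) x)^2)
      = integral\<^sup>L (Gn n) (\<lambda>x. (Lf c n x)^2) + integral\<^sup>L (Gn n) (\<lambda>x. (c n)^2) + 3 * integral\<^sup>L (Gn n) (\<lambda>x. 0)"
  proof (rule Gn_step)
    show "mom (Suc n) (\<lambda>x. (Lf c (Suc n) x)^2)" by (intro mom_pow mom_Lf) simp
    show "mom n (\<lambda>x. (Lf c n x)^2)" by (intro mom_pow mom_Lf) simp
    show "mom n (\<lambda>x. 2 * c n * Lf c n x)" by (intro mom_cmult mom_Lf) simp
    show "mom n (\<lambda>x. (c n)^2)" by (rule mom_const)
    show "mom n (\<lambda>x. 0)" by (rule mom_const)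
    show "mom n (\<lambda>x. 0)" by (rule mom_const)
    fix x y
    show "(Lf c (Suc n) (x(n:=y)))^2 = (Lf c n x)^2 + 2 * c n * Lf c n x * y + (c n)^2 * y^2 + 0 * y^3 + 0 * y^4"
      by (simp add: Lf_Suc Lf_upd power2_eq_square algebra_simps)
  qed
  then show ?case using Suc.IH by (simp add: Gn_const)
qed

lemma EL4: "integral\<^sup>L (Gn n) (\<lambda>x. (Lf c n x)^4) = 3 * (\<Sum>i<n. (c i)^2)^2"
proof (induction n)
  case 0 then show ?case by (simp add: Lf_def Gn_const)
next
  case (Suc n)
  have "integral\<^sup>L (Gn (Suc n)) (\<lambda>x. (Lf c (Suc n) x)^4)
      = integral\<^sup>L (Gn n) (\<lambda>x. (Lf c n x)^4) + integral\<^sup>L (Gn n) (\<lambda>x. 6 * (c n)^2 * (Lf c n x)^2) + 3 * integral\<^sup>L (Gn n) (\<lambda>x. (c n)^4)"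
  proof (rule Gn_step)
    show "mom (Suc n) (\<lambda>x. (Lf c (Suc n) x)^4)" by (intro mom_pow mom_Lf) simp
    show "mom n (\<lambda>x. (Lf c n x)^4)" by (intro mom_pow mom_Lf) simp
    show "mom n (\<lambda>x. 4 * c n * (Lf c n x)^3)" by (intro mom_cmult mom_pow mom_Lf) simp
    show "mom n (\<lambda>x. 6 * (c n)^2 * (Lf c n x)^2)" by (intro mom_cmult mom_pow mom_Lf) simp
    show "mom n (\<lambda>x. 4 * (c n)^3 * Lf c n x)" by (intro mom_cmult mom_Lf) simp
    show "mom n (\<lambda>x. (c n)^4)" by (rule mom_const)
    fix x y
    show "(Lf c (Suc n) (x(n:=y)))^4 = (Lf c n x)^4 + 4 * c n * (Lf c n x)^3 * y
       + 6 * (c n)^2 * (Lf c n x)^2 * y^2 + 4 * (c n)^3 * Lf c n x * y^3 + (c n)^4 * y^4"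
      by (simp add: Lf_Suc Lf_upd) algebra
  qed
  also have "\<dots> = 3 * (\<Sum>i<n. (c i)^2)^2 + 6 * (c n)^2 * (\<Sum>i<n. (c i)^2) + 3 * (c n)^4"
    using Suc.IH EL2[of n c] by (simp add: Gn_const)
  also have "\<dots> = 3 * (\<Sum>i<Suc n. (c i)^2)^2"
    by (simp add: power2_eq_square algebra_simps power4_eq_xxxx)
  finally show ?case .
qed

lemma EQ1: "integral\<^sup>L (Gn n) (Qn a b n) = (\<Sum>i<n. a i)"
proof (induction n)
  case 0 then show ?case by (simp add: Qn_def Dn_def On_def Gn_const)
next
  case (Suc n)
  have "integral\<^sup>L (Gn (Suc n)) (Qn a b (Suc n))
      = integral\<^sup>L (Gn n) (Qn a b n) + integral\<^sup>L (Gn n) (\<lambda>x. a n) + 3 * integral\<^sup>L (Gn n) (\<lambda>x. 0)"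
  proof (rule Gn_step)
    show "mom (Suc n) (Qn a b (Suc n))" by (intro mom_Qn) simp
    show "mom n (Qn a b n)" by (intro mom_Qn) simp
    show "mom n (Lf (\<lambda>i. b i n) n)" by (intro mom_Lf) simp
    show "mom n (\<lambda>x. a n)" by (rule mom_const)
    show "mom n (\<lambda>x. 0)" by (rule mom_const)
    show "mom n (\<lambda>x. 0)" by (rule mom_const)
    fix x y
    show "Qn a b (Suc n) (x(n:=y)) = Qn a b n x + Lf (\<lambda>i. b i n) n x * y + a n * y^2 + 0 * y^3 + 0 * y^4"
      by (simp add: Qn_def Dn_Suc On_Suc Dn_upd On_upd Lf_upd algebra_simps)
  qed
  then show ?case using Suc.IH by (simp add: Gn_const)
qed

lemma EQ2: "integral\<^sup>L (Gn n) (\<lambda>x. (Qn a b n x)^2) =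
   (\<Sum>i<n. a i)^2 + 2 * (\<Sum>i<n. (a i)^2) + (\<Sum>j<n. \<Sum>i<j. (b i j)^2)"
proof (induction n)
  case 0 then show ?case by (simp add: Qn_def Dn_def On_def Gn_const)
next
  case (Suc n)
  let ?L = "Lf (\<lambda>i. b i n) n"
  have "integral\<^sup>L (Gn (Suc n)) (\<lambda>x. (Qn a b (Suc n) x)^2)
      = integral\<^sup>L (Gn n) (\<lambda>x. (Qn a b n x)^2) + integral\<^sup>L (Gn n) (\<lambda>x. (?L x)^2 + 2 * a n * Qn a b n x)
        + 3 * integral\<^sup>L (Gn n) (\<lambda>x. (a n)^2)"
  proof (rule Gn_step)
    show "mom (Suc n) (\<lambda>x. (Qn a b (Suc n) x)^2)" by (intro mom_pow mom_Qn) simp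
    show "mom n (\<lambda>x. (Qn a b n x)^2)" by (intro mom_pow mom_Qn) simp
    show "mom n (\<lambda>x. 2 * Qn a b n x * ?L x)" by (intro mom_mult mom_cmult mom_Qn mom_Lf) simp_all
    show "mom n (\<lambda>x. (?L x)^2 + 2 * a n * Qn a b n x)" by (intro mom_add mom_pow mom_cmult mom_Qn mom_Lf) simp_all
    show "mom n (\<lambda>x. 2 * a n * ?L x)" by (intro mom_cmult mom_Lf) simp
    show "mom n (\<lambda>x. (a n)^2)" by (rule mom_const)
    fix x y
    show "(Qn a b (Suc n) (x(n:=y)))^2 = (Qn a b n x)^2 + 2 * Qn a b n x * ?L x * y
      + ((?L x)^2 + 2 * a n * Qn a b n x) * y^2 + 2 * a n * ?L x * y^3 + (a n)^2 * y^4"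
      by (simp add: Qn_def Dn_Suc On_Suc Dn_upd On_upd Lf_upd) algebra
  qed
  also have "\<dots> = integral\<^sup>L (Gn n) (\<lambda>x. (Qn a b n x)^2) + (\<Sum>i<n. (b i n)^2) + 2 * a n * (\<Sum>i<n. a i) + 3 * (a n)^2"
  proof -
    have "integral\<^sup>L (Gn n) (\<lambda>x. (?L x)^2 + 2 * a n * Qn a b n x)
        = integral\<^sup>L (Gn n) (\<lambda>x. (?L x)^2) + integral\<^sup>L (Gn n) (\<lambda>x. 2 * a n * Qn a b n x)"
      by (intro Bochner_Integration.integral_add mom_integrable mom_pow mom_cmult mom_Qn mom_Lf) simp_all
    also have "\<dots> = (\<Sum>i<n. (b i n)^2) + 2 * a n * (\<Sum>i<n. a i)"
      using EL2[of n "\<lambda>i. b i n"] EQ1[of n a b] by simp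
    finally show ?thesis by (simp add: Gn_const)
  qed
  also have "\<dots> = (\<Sum>i<Suc n. a i)^2 + 2 * (\<Sum>i<Suc n. (a i)^2) + (\<Sum>j<Suc n. \<Sum>i<j. (b i j)^2)"
    using Suc.IH by (simp add: power2_eq_square algebra_simps)
  finally show ?case .
qed

lemma amgm: fixes s u v :: real assumes "0 < s" shows "u * v \<le> (s * u^2 + v^2 / s) / 2"
proof -
  have "0 \<le> (s * u - v)^2" by simp
  then have "2 * s * (u * v) \<le> s^2 * u^2 + v^2" by (simp add: power2_eq_square algebra_simps)
  then have "2 * s * (u * v) / s \<le> (s^2 * u^2 + v^2) / s"
    using assms by (intro divide_right_mono) auto
  moreover have "2 * s * (u * v) / s = 2 * (u * v)" using assms by simp
  moreover have "(s^2 * u^2 + v^2) / s = s * u^2 + v^2 / s" using assms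
    by (simp add: power2_eq_square add_divide_distrib)
  ultimately show ?thesis by simp
qed

lemma mom_cdiv: assumes "mom n f" shows "mom n (\<lambda>x. f x / c)"
  using mom_cmult[OF assms, of "1/c"] by simp

definition Fb :: "(nat \<Rightarrow> nat \<Rightarrow> real) \<Rightarrow> nat \<Rightarrow> real" where
  "Fb b n = (\<Sum>j<n. \<Sum>i<j. (b i j)^2)"

lemma Fb_nonneg: "0 \<le> Fb b n" unfolding Fb_def by (intro sum_nonneg) auto

lemma Fb_zero: assumes "Fb b n = 0" shows "On b n x = 0"
proof -
  have "\<forall>j\<in>{..<n}. (\<Sum>i<j. (b i j)^2) = 0"
    using assms unfolding Fb_def by (subst sum_nonneg_eq_0_iff[symmetric]) (auto intro: sum_nonneg)
  then have "\<forall>j<n. \<forall>i<j. b i j = 0" by (simp add: sum_nonneg_eq_0_iff)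
  then have "\<forall>j<n. Lf (\<lambda>i. b i j) j x = 0" unfolding Lf_def by simp
  then show ?thesis unfolding On_def by simp
qed

lemma Lf_zero: assumes "(\<Sum>i<n. (c i)^2) = 0" shows "Lf c n x = 0"
proof -
  have "\<forall>i<n. c i = 0" using assms by (simp add: sum_nonneg_eq_0_iff)
  then show ?thesis unfolding Lf_def by simp
qed

lemma EO4: "integral\<^sup>L (Gn n) (\<lambda>x. (On b n x)^4) \<le> 36 * (Fb b n)^2"
proof (induction n)
  case 0 then show ?case by (simp add: On_def Gn_const)
next
  case (Suc n)
  let ?L = "Lf (\<lambda>i. b i n) n"
  let ?O = "On b n"
  define F where "F = Fb b n"
  define \<beta> where "\<beta> = (\<Sum>i<n. (b i n)^2)"
  have F0: "0 \<le> F" unfolding F_def by (rule Fb_nonneg)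
  have b0: "0 \<le> \<beta>" unfolding \<beta>_def by (intro sum_nonneg) auto
  have IH: "integral\<^sup>L (Gn n) (\<lambda>x. (?O x)^4) \<le> 36 * F^2" using Suc.IH unfolding F_def .
  have L4: "integral\<^sup>L (Gn n) (\<lambda>x. (?L x)^4) = 3 * \<beta>^2" unfolding \<beta>_def by (rule EL4)
  have mO4: "mom n (\<lambda>x. (?O x)^4)" by (intro mom_pow mom_On) simp
  have mL4: "mom n (\<lambda>x. (?L x)^4)" by (intro mom_pow mom_Lf) simp
  have mOL: "mom n (\<lambda>x. 6 * (?O x)^2 * (?L x)^2)" by (intro mom_mult mom_cmult mom_pow mom_On mom_Lf) simp_all
  have step: "integral\<^sup>L (Gn (Suc n)) (\<lambda>x. (On b (Suc n) x)^4)
      = integral\<^sup>L (Gn n) (\<lambda>x. (?O x)^4) + integral\<^sup>L (Gn n) (\<lambda>x. 6 * (?O x)^2 * (?L x)^2)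
        + 3 * integral\<^sup>L (Gn n) (\<lambda>x. (?L x)^4)"
  proof (rule Gn_step)
    show "mom (Suc n) (\<lambda>x. (On b (Suc n) x)^4)" by (intro mom_pow mom_On) simp
    show "mom n (\<lambda>x. (?O x)^4)" by (rule mO4)
    show "mom n (\<lambda>x. 4 * (?O x)^3 * ?L x)" by (intro mom_mult mom_cmult mom_pow mom_On mom_Lf) simp_all
    show "mom n (\<lambda>x. 6 * (?O x)^2 * (?L x)^2)" by (rule mOL)
    show "mom n (\<lambda>x. 4 * ?O x * (?L x)^3)" by (intro mom_mult mom_cmult mom_pow mom_On mom_Lf) simp_all
    show "mom n (\<lambda>x. (?L x)^4)" by (rule mL4)
    fix x y
    show "(On b (Suc n) (x(n:=y)))^4 = (?O x)^4 + 4 * (?O x)^3 * ?L x * y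
      + 6 * (?O x)^2 * (?L x)^2 * y^2 + 4 * ?O x * (?L x)^3 * y^3 + (?L x)^4 * y^4"
      by (simp add: On_Suc On_upd Lf_upd) algebra
  qed
  have cross: "integral\<^sup>L (Gn n) (\<lambda>x. (?O x)^2 * (?L x)^2) \<le> 12 * F * \<beta>"
  proof (cases "F = 0 \<or> \<beta> = 0")
    case True
    then have "\<And>x. (?O x)^2 * (?L x)^2 = 0"
      using Fb_zero[of b n] Lf_zero[of "\<lambda>i. b i n" n] unfolding F_def \<beta>_def by auto
    then have "(\<lambda>x. (?O x)^2 * (?L x)^2) = (\<lambda>x. 0)" by (rule ext)
    then show ?thesis using True F0 b0 by (simp add: Gn_const)
  next
    case False
    then have Fp: "0 < F" and bp: "0 < \<beta>" using F0 b0 by auto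
    define s where "s = \<beta> / (3 * F)"
    have sp: "0 < s" unfolding s_def using Fp bp by simp
    have eqf: "(\<lambda>x. (s * ((?O x)^2)^2 + ((?L x)^2)^2 / s) / 2) = (\<lambda>x. s / 2 * (?O x)^4 + (?L x)^4 / (2 * s))"
      by (rule ext) (simp add: field_simps power_mult[symmetric])
    have "integral\<^sup>L (Gn n) (\<lambda>x. (?O x)^2 * (?L x)^2)
        \<le> integral\<^sup>L (Gn n) (\<lambda>x. (s * ((?O x)^2)^2 + ((?L x)^2)^2 / s) / 2)"
    proof (rule Bochner_Integration.integral_mono)
      show "integrable (Gn n) (\<lambda>x. (?O x)^2 * (?L x)^2)"
        by (intro mom_integrable mom_mult mom_pow mom_On mom_Lf) simp_all
      have "integrable (Gn n) (\<lambda>x. s / 2 * (?O x)^4 + (?L x)^4 / (2 * s))"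
        by (intro mom_integrable mom_add mom_cmult mom_cdiv mO4 mL4)
      then show "integrable (Gn n) (\<lambda>x. (s * ((?O x)^2)^2 + ((?L x)^2)^2 / s) / 2)"
        unfolding eqf[symmetric] .
      fix x show "(?O x)^2 * (?L x)^2 \<le> (s * ((?O x)^2)^2 + ((?L x)^2)^2 / s) / 2"
        by (rule amgm[OF sp])
    qed
    also have "\<dots> = (s * integral\<^sup>L (Gn n) (\<lambda>x. (?O x)^4) + integral\<^sup>L (Gn n) (\<lambda>x. (?L x)^4) / s) / 2"
    proof -
      show ?thesis unfolding eqf
        using mom_integrable[OF mO4] mom_integrable[OF mL4]
        by (simp add: Bochner_Integration.integral_add field_simps)
    qed
    also have "\<dots> \<le> (s * (36 * F^2) + 3 * \<beta>^2 / s) / 2"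
      using IH sp unfolding L4 by (intro divide_right_mono add_mono mult_left_mono) auto
    also have "\<dots> = 21/2 * F * \<beta>"
      unfolding s_def using Fp bp by (simp add: field_simps power2_eq_square)
    also have "\<dots> \<le> 12 * F * \<beta>" using Fp bp by simp
    finally show ?thesis .
  qed
  have "integral\<^sup>L (Gn (Suc n)) (\<lambda>x. (On b (Suc n) x)^4) \<le> 36 * F^2 + 6 * (12 * F * \<beta>) + 3 * (3 * \<beta>^2)"
  proof -
    have "integral\<^sup>L (Gn n) (\<lambda>x. 6 * (?O x)^2 * (?L x)^2) = 6 * integral\<^sup>L (Gn n) (\<lambda>x. (?O x)^2 * (?L x)^2)"
      by (simp add: mult.assoc)
    then show ?thesis unfolding step L4 using IH cross by linarith
  qed
  also have "\<dots> \<le> 36 * (F + \<beta>)^2" using F0 b0 by (simp add: power2_eq_square algebra_simps)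
  also have "F + \<beta> = Fb b (Suc n)" unfolding F_def \<beta>_def Fb_def by simp
  finally show ?case .
qed

lemma G_prob_UNIV[simp]: "measure std_gauss UNIV = 1"
  using G.prob_space by simp

lemma Gn_coord_int: assumes "i < n"
  shows "integral\<^sup>L (Gn n) (\<lambda>x. (x i) ^ k) = integral\<^sup>L std_gauss (\<lambda>y. y ^ k)"
proof -
  define f where "f = (\<lambda>j (y::real). if j = i then y ^ k else 1)"
  have fi: "integrable std_gauss (f j)" for j
    unfolding f_def by (cases "j = i") (simp_all add: G_int_pow)
  have "integral\<^sup>L (Gn n) (\<lambda>x. \<Prod>j\<in>{..<n}. f j (x j)) = (\<Prod>j\<in>{..<n}. integral\<^sup>L std_gauss (f j))"
    unfolding Gn_def by (rule PG.product_integral_prod) (rule finite_lessThan, rule fi)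
  also have "\<dots> = integral\<^sup>L std_gauss (f i) * (\<Prod>j\<in>{..<n} - {i}. integral\<^sup>L std_gauss (f j))"
    by (rule prod.remove) (simp_all add: assms)
  also have "(\<Prod>j\<in>{..<n} - {i}. integral\<^sup>L std_gauss (f j)) = 1"
    by (rule prod.neutral) (auto simp: f_def G_m0)
  also have "(\<lambda>x. \<Prod>j\<in>{..<n}. f j (x j)) = (\<lambda>x. (x i) ^ k)"
  proof (rule ext)
    fix x
    have "(\<Prod>j\<in>{..<n}. f j (x j)) = f i (x i) * (\<Prod>j\<in>{..<n} - {i}. f j (x j))"
      by (rule prod.remove) (simp_all add: assms)
    also have "(\<Prod>j\<in>{..<n} - {i}. f j (x j)) = 1" by (rule prod.neutral) (auto simp: f_def)
    finally show "(\<Prod>j\<in>{..<n}. f j (x j)) = (x i) ^ k" by (simp add: f_def)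
  qed
  finally show ?thesis by (simp add: f_def)
qed

lemma ED4: "integral\<^sup>L (Gn n) (\<lambda>x. (Dn a n x)^4) \<le> 105 * (real n)^2 * (\<Sum>i<n. (a i)^2)^2"
proof -
  define A where "A = (\<Sum>i<n. (a i)^2)"
  have A0: "0 \<le> A" unfolding A_def by (intro sum_nonneg) auto
  have pw: "(Dn a n x)^4 \<le> A^2 * real n * (\<Sum>i<n. (x i)^8)" for x
  proof -
    define S4 where "S4 = (\<Sum>i<n. ((x i)^2)^2)"
    have c1: "(Dn a n x)^2 \<le> A * S4"
      unfolding Dn_def A_def S4_def by (rule Cauchy_Schwarz_ineq_sum)
    have "(\<Sum>i<n. 1 * ((x i)^2)^2)^2 \<le> (\<Sum>i<n. 1^2) * (\<Sum>i<n. (((x i)^2)^2)^2)"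
      by (rule Cauchy_Schwarz_ineq_sum)
    then have c2: "S4^2 \<le> real n * (\<Sum>i<n. (x i)^8)"
      unfolding S4_def by (simp add: power_mult[symmetric])
    have "(Dn a n x)^4 = ((Dn a n x)^2)^2" by (simp add: power_mult[symmetric])
    also have "\<dots> \<le> (A * S4)^2" by (rule power_mono[OF c1]) simp
    also have "\<dots> = A^2 * S4^2" by (simp add: power_mult_distrib)
    also have "\<dots> \<le> A^2 * (real n * (\<Sum>i<n. (x i)^8))" by (rule mult_left_mono[OF c2]) simp
    finally show ?thesis by simp
  qed
  have "integral\<^sup>L (Gn n) (\<lambda>x. (Dn a n x)^4) \<le> integral\<^sup>L (Gn n) (\<lambda>x. A^2 * real n * (\<Sum>i<n. (x i)^8))"
  proof (rule Bochner_Integration.integral_mono)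
    show "integrable (Gn n) (\<lambda>x. (Dn a n x)^4)" by (intro mom_integrable mom_pow mom_Dn) simp
    show "integrable (Gn n) (\<lambda>x. A^2 * real n * (\<Sum>i<n. (x i)^8))"
      by (intro mom_integrable mom_cmult mom_sum mom_pow mom_coord) simp
    fix x show "(Dn a n x)^4 \<le> A^2 * real n * (\<Sum>i<n. (x i)^8)" by (rule pw)
  qed
  also have "\<dots> = A^2 * real n * (\<Sum>i<n. integral\<^sup>L (Gn n) (\<lambda>x. (x i)^8))"
  proof -
    have "integral\<^sup>L (Gn n) (\<lambda>x. \<Sum>i<n. (x i)^8) = (\<Sum>i<n. integral\<^sup>L (Gn n) (\<lambda>x. (x i)^8))"
      by (rule Bochner_Integration.integral_sum) (intro mom_integrable mom_pow mom_coord, simp)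
    then show ?thesis by simp
  qed
  also have "(\<Sum>i<n. integral\<^sup>L (Gn n) (\<lambda>x. (x i)^8)) = (\<Sum>i<n. 105)"
    by (intro sum.cong refl) (simp add: Gn_coord_int G_m8)
  also have "A^2 * real n * (\<Sum>i<n. (105::real)) = 105 * (real n)^2 * A^2"
    by (simp add: power2_eq_square)
  finally show ?thesis unfolding A_def .
qed

lemma pow4_le: fixes d e :: real shows "(d + e)^4 \<le> 8 * (d^4 + e^4)"
proof -
  have "0 \<le> (d - e)^2" by simp
  then have h1: "(d + e)^2 \<le> 2 * (d^2 + e^2)" by (simp add: power2_eq_square algebra_simps)
  have "0 \<le> (d^2 - e^2)^2" by simp
  then have h2: "(d^2 + e^2)^2 \<le> 2 * (d^4 + e^4)" by (simp add: power2_eq_square algebra_simps power4_eq_xxxx)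
  have "(d + e)^4 = ((d + e)^2)^2" by (simp add: power_mult[symmetric])
  also have "\<dots> \<le> (2 * (d^2 + e^2))^2" by (rule power_mono[OF h1]) simp
  also have "\<dots> = 4 * (d^2 + e^2)^2" by (simp only: power_mult_distrib) simp
  also have "\<dots> \<le> 8 * (d^4 + e^4)" using h2 by simp
  finally show ?thesis .
qed

lemma EQ4: "integral\<^sup>L (Gn n) (\<lambda>x. (Qn a b n x)^4)
   \<le> 8 * (105 * (real n)^2 * (\<Sum>i<n. (a i)^2)^2 + 36 * (Fb b n)^2)"
proof -
  have "integral\<^sup>L (Gn n) (\<lambda>x. (Qn a b n x)^4) \<le> integral\<^sup>L (Gn n) (\<lambda>x. 8 * ((Dn a n x)^4 + (On b n x)^4))"
  proof (rule Bochner_Integration.integral_mono)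
    show "integrable (Gn n) (\<lambda>x. (Qn a b n x)^4)" by (intro mom_integrable mom_pow mom_Qn) simp
    show "integrable (Gn n) (\<lambda>x. 8 * ((Dn a n x)^4 + (On b n x)^4))"
      by (intro mom_integrable mom_cmult mom_add mom_pow mom_Dn mom_On) simp_all
    fix x show "(Qn a b n x)^4 \<le> 8 * ((Dn a n x)^4 + (On b n x)^4)"
      unfolding Qn_def by (rule pow4_le)
  qed
  also have "\<dots> = 8 * (integral\<^sup>L (Gn n) (\<lambda>x. (Dn a n x)^4) + integral\<^sup>L (Gn n) (\<lambda>x. (On b n x)^4))"
    by (simp add: Bochner_Integration.integral_add mom_integrable mom_pow mom_Dn mom_On)
  also have "\<dots> \<le> 8 * (105 * (real n)^2 * (\<Sum>i<n. (a i)^2)^2 + 36 * (Fb b n)^2)"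
    using ED4[of n a] EO4[of n b] by simp
  finally show ?thesis .
qed

lemma exp_neg_le: fixes u :: real assumes "0 \<le> u" shows "exp (- u) \<le> 1 - u + u^2 / 2"
proof -
  let ?h = "\<lambda>t::real. 1 - t + t^2 / 2 - exp (- t)"
  have "?h 0 \<le> ?h u"
  proof (rule DERIV_nonneg_imp_increasing_open[OF assms])
    fix x :: real assume "0 < x" "x < u"
    have "DERIV ?h x :> (- 1 + x + exp (- x))"
      by (auto intro!: derivative_eq_intros)
    moreover have "0 \<le> - 1 + x + exp (- x)" using exp_ge_add_one_self[of "- x"] by simp
    ultimately show "\<exists>y. DERIV ?h x :> y \<and> 0 \<le> y" by blast
  next
    show "continuous_on {0..u} ?h" by (intro continuous_intros) auto
  qed
  then show ?thesis by simp
qed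

lemma svec_idx_Suc: "svec_idx (Suc d) = svec_idx d \<union> (\<lambda>i. (i, d)) ` {..d}"
  unfolding svec_idx_def by auto

lemma svec_sum: "(\<Sum>p\<in>svec_idx d. g p) = (\<Sum>j<d. g (j, j) + (\<Sum>i<j. g (i, j)))"
proof (induction d)
  case 0 then show ?case by (simp add: svec_idx_def)
next
  case (Suc d)
  have fin: "finite (svec_idx d)"
  proof -
    have "svec_idx d \<subseteq> {..<d} \<times> {..<d}" unfolding svec_idx_def by auto
    then show ?thesis by (rule finite_subset) simp
  qed
  have disj: "svec_idx d \<inter> (\<lambda>i. (i, d)) ` {..d} = {}" unfolding svec_idx_def by auto
  have "(\<Sum>p\<in>svec_idx (Suc d). g p) = (\<Sum>p\<in>svec_idx d. g p) + (\<Sum>p\<in>(\<lambda>i. (i, d)) ` {..d}. g p)"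
    unfolding svec_idx_Suc by (rule sum.union_disjoint[OF fin _ disj]) simp
  also have "(\<Sum>p\<in>(\<lambda>i. (i, d)) ` {..d}. g p) = (\<Sum>i\<in>{..d}. g (i, d))"
    by (subst sum.reindex) (auto simp: inj_on_def)
  also have "\<dots> = g (d, d) + (\<Sum>i<d. g (i, d))"
    by (simp add: lessThan_Suc_atMost[symmetric] add.commute)
  finally show ?case using Suc.IH by simp
qed

definition Yf :: "nat \<Rightarrow> (nat \<times> nat \<Rightarrow> real) \<Rightarrow> (nat \<Rightarrow> real) \<Rightarrow> real" where
  "Yf d v z = (\<Sum>p\<in>svec_idx d. v p * svec (outer z) p)"

lemma Yf_eq: "Yf d v z = Qn (\<lambda>i. v (i, i)) (\<lambda>i j. sqrt 2 * v (i, j)) d z"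
proof -
  have "Yf d v z = (\<Sum>j<d. v (j, j) * (z j)^2 + (\<Sum>i<j. sqrt 2 * v (i, j) * z i) * z j)"
    unfolding Yf_def svec_sum
  proof (intro sum.cong refl)
    fix j assume "j \<in> {..<d}"
    have "(\<Sum>i<j. v (i, j) * svec (outer z) (i, j)) = (\<Sum>i<j. sqrt 2 * v (i, j) * z i * z j)"
      by (intro sum.cong refl) (auto simp: svec_def outer_def)
    also have "\<dots> = (\<Sum>i<j. sqrt 2 * v (i, j) * z i) * z j" by (simp add: sum_distrib_right)
    finally show "v (j, j) * svec (outer z) (j, j) + (\<Sum>i<j. v (i, j) * svec (outer z) (i, j))
        = v (j, j) * (z j)^2 + (\<Sum>i<j. sqrt 2 * v (i, j) * z i) * z j"
      by (simp add: svec_def outer_def power2_eq_square)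
  qed
  also have "\<dots> = Qn (\<lambda>i. v (i, i)) (\<lambda>i j. sqrt 2 * v (i, j)) d z"
    unfolding Qn_def Dn_def On_def Lf_def by (simp add: sum.distrib)
  finally show ?thesis .
qed

lemma norm_eq: "(\<Sum>p\<in>svec_idx d. (v p)^2) = (\<Sum>i<d. (v (i, i))^2) + Fb (\<lambda>i j. sqrt 2 * v (i, j)) d / 2"
  unfolding svec_sum Fb_def
  by (simp add: sum.distrib power_mult_distrib sum_divide_distrib)

lemma Y_moments:
  assumes norm: "(\<Sum>p\<in>svec_idx d. (v p)^2) = 1"
  shows "1 \<le> d" "mom d (Yf d v)"
    "2 \<le> integral\<^sup>L (Gn d) (\<lambda>z. (Yf d v z)^2)"
    "integral\<^sup>L (Gn d) (\<lambda>z. (Yf d v z)^4) \<le> 2000 * (real d)^2"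
proof -
  define a where "a = (\<lambda>i. v (i, i))"
  define b where "b = (\<lambda>i j. sqrt 2 * v (i, j))"
  define A where "A = (\<Sum>i<d. (a i)^2)"
  define F where "F = Fb b d"
  have YQ: "Yf d v = Qn a b d" unfolding a_def b_def by (rule ext) (rule Yf_eq)
  have AF: "A + F / 2 = 1" using norm norm_eq[of v d] unfolding A_def F_def a_def b_def by simp
  have A0: "0 \<le> A" unfolding A_def by (intro sum_nonneg) auto
  have F0: "0 \<le> F" unfolding F_def by (rule Fb_nonneg)
  show d1: "1 \<le> d"
  proof (rule ccontr)
    assume "\<not> 1 \<le> d" then have "d = 0" by simp
    then show False using norm by (simp add: svec_idx_def)
  qed
  show "mom d (Yf d v)" unfolding YQ by (rule mom_Qn) simp
  have "integral\<^sup>L (Gn d) (\<lambda>z. (Yf d v z)^2) = (\<Sum>i<d. a i)^2 + 2 * A + F"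
    unfolding YQ A_def F_def Fb_def by (rule EQ2)
  also have "\<dots> = (\<Sum>i<d. a i)^2 + 2" using AF by simp
  finally show "2 \<le> integral\<^sup>L (Gn d) (\<lambda>z. (Yf d v z)^2)" by simp
  have "integral\<^sup>L (Gn d) (\<lambda>z. (Yf d v z)^4) \<le> 8 * (105 * (real d)^2 * A^2 + 36 * F^2)"
    unfolding YQ A_def F_def by (rule EQ4)
  also have "\<dots> \<le> 8 * (105 * (real d)^2 * 1 + 36 * 4)"
  proof -
    have "A^2 \<le> 1" using A0 AF F0 by (simp add: power_le_one)
    moreover have "F^2 \<le> 2^2" using F0 AF A0 by (intro power_mono) auto
    ultimately show ?thesis by (intro mult_left_mono add_mono) auto
  qed
  also have "\<dots> \<le> 2000 * (real d)^2"
  proof -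
    have "1 \<le> (real d)^2" using d1 by simp
    then show ?thesis by simp
  qed
  finally show "integral\<^sup>L (Gn d) (\<lambda>z. (Yf d v z)^4) \<le> 2000 * (real d)^2" .
qed

lemma mgf_bound:
  assumes norm: "(\<Sum>p\<in>svec_idx d. (v p)^2) = 1" and lam: "0 \<le> lam"
  shows "integral\<^sup>L (Gn d) (\<lambda>z. exp (- lam * (Yf d v z)^2)) \<le> exp (- 2 * lam + lam^2 * 1000 * (real d)^2)"
    and "0 \<le> integral\<^sup>L (Gn d) (\<lambda>z. exp (- lam * (Yf d v z)^2))"
    and "integrable (Gn d) (\<lambda>z. exp (- lam * (Yf d v z)^2))"
proof -
  note M = Y_moments[OF norm]
  interpret prob_space "Gn d" by (rule prob_Gn)
  have m: "(\<lambda>z. - lam * (Yf d v z)^2) \<in> borel_measurable (Gn d)"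
    by (intro mom_meas mom_cmult mom_pow M(2))
  have meas: "(\<lambda>z. exp (- lam * (Yf d v z)^2)) \<in> borel_measurable (Gn d)"
    using measurable_compose[OF m borel_measurable_exp] .
  show int: "integrable (Gn d) (\<lambda>z. exp (- lam * (Yf d v z)^2))"
  proof (rule integrable_const_bound[where B=1])
    show "AE x in Gn d. norm (exp (- lam * (Yf d v x)^2)) \<le> 1"
      using lam by (intro AE_I2) simp
  qed (rule meas)
  show "0 \<le> integral\<^sup>L (Gn d) (\<lambda>z. exp (- lam * (Yf d v z)^2))"
    by (rule Bochner_Integration.integral_nonneg) simp
  have m2: "mom d (\<lambda>z. (Yf d v z)^2)" and m4: "mom d (\<lambda>z. (Yf d v z)^4)"
    by (intro mom_pow M(2))+
  have "integral\<^sup>L (Gn d) (\<lambda>z. exp (- lam * (Yf d v z)^2))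
      \<le> integral\<^sup>L (Gn d) (\<lambda>z. 1 - lam * (Yf d v z)^2 + lam^2 / 2 * (Yf d v z)^4)"
  proof (rule Bochner_Integration.integral_mono[OF int])
    show "integrable (Gn d) (\<lambda>z. 1 - lam * (Yf d v z)^2 + lam^2 / 2 * (Yf d v z)^4)"
      by (intro mom_integrable mom_add mom_diff mom_const mom_cmult m2 m4)
    fix z
    have "exp (- (lam * (Yf d v z)^2)) \<le> 1 - lam * (Yf d v z)^2 + (lam * (Yf d v z)^2)^2 / 2"
      using lam by (intro exp_neg_le) simp
    also have "(lam * (Yf d v z)^2)^2 / 2 = lam^2 / 2 * (Yf d v z)^4"
      by (simp add: power_mult_distrib power_mult[symmetric])
    finally show "exp (- lam * (Yf d v z)^2) \<le> 1 - lam * (Yf d v z)^2 + lam^2 / 2 * (Yf d v z)^4"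
      by simp
  qed
  also have "\<dots> = 1 - lam * integral\<^sup>L (Gn d) (\<lambda>z. (Yf d v z)^2) + lam^2 / 2 * integral\<^sup>L (Gn d) (\<lambda>z. (Yf d v z)^4)"
    using mom_integrable[OF m2] mom_integrable[OF m4]
    by (simp add: Bochner_Integration.integral_add Bochner_Integration.integral_diff)
  also have "\<dots> \<le> 1 - lam * 2 + lam^2 / 2 * (2000 * (real d)^2)"
    using M(3,4) lam by (intro add_mono diff_mono mult_left_mono) auto
  also have "\<dots> = 1 + (- 2 * lam + lam^2 * 1000 * (real d)^2)" by simp
  also have "\<dots> \<le> exp (- 2 * lam + lam^2 * 1000 * (real d)^2)" by (rule exp_ge_add_one_self)
  finally show "integral\<^sup>L (Gn d) (\<lambda>z. exp (- lam * (Yf d v z)^2)) \<le> exp (- 2 * lam + lam^2 * 1000 * (real d)^2)" .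
qed

lemma chernoff:
  assumes norm: "(\<Sum>p\<in>svec_idx d. (v p)^2) = 1" and lam: "0 \<le> lam"
  shows "measure (gauss_sample T d) {x \<in> space (gauss_sample T d). (\<Sum>t<T. (Yf d v (x t))^2) < a}
     \<le> exp (lam * a) * exp (- 2 * lam + lam^2 * 1000 * (real d)^2) ^ T"
proof -
  have GS: "gauss_sample T d = PiM {..<T} (\<lambda>_. Gn d)" unfolding gauss_sample_def Gn_def ..
  interpret PS: product_sigma_finite "\<lambda>_::nat. Gn d"
    by (intro product_sigma_finite.intro prob_space_imp_sigma_finite prob_Gn)
  interpret P: prob_space "PiM {..<T} (\<lambda>_. Gn d)" by (rule prob_space_PiM) (rule prob_Gn)
  let ?M = "PiM {..<T} (\<lambda>_. Gn d)"
  let ?S = "\<lambda>x. \<Sum>t<T. (Yf d v (x t))^2"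
  let ?e = "\<lambda>z. exp (- lam * (Yf d v z)^2)"
  define A where "A = {x \<in> space ?M. ?S x < a}"
  note mgf = mgf_bound[OF norm lam]
  have Ymeas: "(\<lambda>z. (Yf d v z)^2) \<in> borel_measurable (Gn d)"
    by (intro mom_meas mom_pow Y_moments(2)[OF norm])
  have Smeas: "?S \<in> borel_measurable ?M"
  proof (rule borel_measurable_sum)
    fix t assume "t \<in> {..<T}"
    then have "(\<lambda>x. x t) \<in> measurable ?M (Gn d)" by (intro measurable_component_singleton) blast
    from measurable_compose[OF this Ymeas]
    show "(\<lambda>x. (Yf d v (x t))^2) \<in> borel_measurable ?M" .
  qed
  have Aset: "A \<in> sets ?M" unfolding A_def by (rule borel_measurable_less[OF Smeas borel_measurable_const])
  have Asub: "A \<subseteq> space ?M" unfolding A_def by blast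
  have "measure ?M A = integral\<^sup>L ?M (indicator A)"
    using Bochner_Integration.integral_indicator[of ?M A] Asub by (simp add: Int_absorb2)
  also have "\<dots> \<le> integral\<^sup>L ?M (\<lambda>x. exp (lam * a) * (\<Prod>t\<in>{..<T}. ?e (x t)))"
  proof (rule Bochner_Integration.integral_mono)
    show "integrable ?M (indicator A :: _ \<Rightarrow> real)"
    proof (rule P.integrable_const_bound[where B=1])
      show "AE x in ?M. norm (indicator A x :: real) \<le> 1" by (intro AE_I2) (simp add: indicator_def)
      show "(indicator A :: _ \<Rightarrow> real) \<in> borel_measurable ?M" by (rule borel_measurable_indicator[OF Aset])
    qed
    have "integrable ?M (\<lambda>x. \<Prod>t\<in>{..<T}. ?e (x t))"
      by (rule PS.product_integrable_prod) (rule finite_lessThan, rule mgf(3))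
    then show "integrable ?M (\<lambda>x. exp (lam * a) * (\<Prod>t\<in>{..<T}. ?e (x t)))"
      by (rule integrable_mult_right)
    fix x assume "x \<in> space ?M"
    have eq: "exp (lam * a) * (\<Prod>t\<in>{..<T}. ?e (x t)) = exp (lam * (a - ?S x))"
    proof -
      have "(\<Prod>t\<in>{..<T}. ?e (x t)) = exp (\<Sum>t<T. - lam * (Yf d v (x t))^2)"
        by (simp add: exp_sum)
      also have "(\<Sum>t<T. - lam * (Yf d v (x t))^2) = - lam * ?S x" by (simp add: sum_distrib_left)
      finally show ?thesis by (simp add: exp_add[symmetric] algebra_simps)
    qed
    show "indicator A x \<le> exp (lam * a) * (\<Prod>t\<in>{..<T}. ?e (x t))"
    proof (cases "x \<in> A")
      case True
      then have "0 \<le> lam * (a - ?S x)" using lam unfolding A_def by simp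
      then show ?thesis unfolding eq using True by simp
    next
      case False then show ?thesis unfolding eq by simp
    qed
  qed
  also have "\<dots> = exp (lam * a) * (\<Prod>t\<in>{..<T}. integral\<^sup>L (Gn d) ?e)"
    using PS.product_integral_prod[of "{..<T}" "\<lambda>_. ?e"] mgf(3) by simp
  also have "\<dots> = exp (lam * a) * (integral\<^sup>L (Gn d) ?e) ^ T" by simp
  also have "\<dots> \<le> exp (lam * a) * exp (- 2 * lam + lam^2 * 1000 * (real d)^2) ^ T"
    by (intro mult_left_mono power_mono mgf(1) mgf(2)) simp
  finally show ?thesis unfolding GS A_def .
qed

theorem lemma2:
  shows "\<exists>c::real>0. \<forall>(d::nat) (T::nat) (v::nat \<times> nat \<Rightarrow> real) (\<delta>::real).
    (\<Sum>p\<in>svec_idx d. (v p)\<^sup>2) = 1 \<longrightarrow> 0 < \<delta> \<longrightarrow> \<delta> < 1 \<longrightarrow>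
    measure (gauss_sample T d)
      {x \<in> space (gauss_sample T d).
         (\<Sum>t<T. (\<Sum>p\<in>svec_idx d. v p * svec (outer (x t)) p)\<^sup>2)
           \<ge> 2 * real T - sqrt (c * real T * (real d)\<^sup>2 * ln (1 / \<delta>))}
    \<ge> 1 - \<delta>"
proof (intro exI[of _ 4000] conjI allI impI)
  show "(0::real) < 4000" by simp
  fix d T :: nat and v :: "nat \<times> nat \<Rightarrow> real" and \<delta> :: real
  assume norm: "(\<Sum>p\<in>svec_idx d. (v p)\<^sup>2) = 1" and d0: "0 < \<delta>" and d1: "\<delta> < 1"
  let ?M = "gauss_sample T d"
  interpret P: prob_space ?M
    unfolding gauss_sample_def by (rule prob_space_PiM) (rule prob_Gn[unfolded Gn_def])
  let ?S = "\<lambda>x. \<Sum>t<T. (Yf d v (x t))^2"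
  define s where "s = sqrt (4000 * real T * (real d)\<^sup>2 * ln (1 / \<delta>))"
  define a where "a = 2 * real T - s"
  have goal_eq: "{x \<in> space ?M. (\<Sum>t<T. (\<Sum>p\<in>svec_idx d. v p * svec (outer (x t)) p)\<^sup>2)
           \<ge> 2 * real T - sqrt (4000 * real T * (real d)\<^sup>2 * ln (1 / \<delta>))}
      = space ?M - {x \<in> space ?M. ?S x < a}"
    unfolding a_def s_def Yf_def by auto
  have Ymeas: "(\<lambda>z. (Yf d v z)^2) \<in> borel_measurable (Gn d)"
    by (intro mom_meas mom_pow Y_moments(2)[OF norm])
  have Smeas: "?S \<in> borel_measurable ?M"
  proof (rule borel_measurable_sum)
    fix t assume "t \<in> {..<T}"
    then have "(\<lambda>x. x t) \<in> measurable ?M (Gn d)"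
      unfolding gauss_sample_def Gn_def[symmetric] by (intro measurable_component_singleton) blast
    from measurable_compose[OF this Ymeas]
    show "(\<lambda>x. (Yf d v (x t))^2) \<in> borel_measurable ?M" .
  qed
  have Aset: "{x \<in> space ?M. ?S x < a} \<in> sets ?M"
    by (rule borel_measurable_less[OF Smeas borel_measurable_const])
  have bound: "measure ?M {x \<in> space ?M. ?S x < a} \<le> \<delta>"
  proof (cases "T = 0")
    case True
    then have e: "{x \<in> space ?M. ?S x < a} = {}" unfolding a_def s_def by simp
    show ?thesis unfolding e using d0 by simp
  next
    case False
    have dpos: "1 \<le> d" by (rule Y_moments(1)[OF norm])
    define L where "L = ln (1 / \<delta>)"
    have Lpos: "0 < L" unfolding L_def using d0 d1 by simp
    define K where "K = 2000 * real T * (real d)^2"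
    have Kpos: "0 < K" unfolding K_def using False dpos by simp
    have s2: "s^2 = 2 * K * L" unfolding s_def K_def L_def
      using Lpos[unfolded L_def] by simp
    define lam where "lam = s / K"
    have s0: "0 \<le> s" unfolding s_def using Lpos[unfolded L_def] False by simp
    have lam0: "0 \<le> lam" unfolding lam_def using s0 Kpos by (rule divide_nonneg_pos)
    have "measure ?M {x \<in> space ?M. ?S x < a}
        \<le> exp (lam * a) * exp (- 2 * lam + lam^2 * 1000 * (real d)^2) ^ T"
      by (rule chernoff[OF norm lam0])
    also have "\<dots> = exp (lam * a + real T * (- 2 * lam + lam^2 * 1000 * (real d)^2))"
      by (simp add: exp_add exp_of_nat_mult)
    also have "lam * a + real T * (- 2 * lam + lam^2 * 1000 * (real d)^2) = - lam * s + K / 2 * lam^2"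
      unfolding a_def K_def by (simp add: algebra_simps)
    also have "\<dots> = - (s^2) / (2 * K)"
      unfolding lam_def using Kpos by (simp add: field_simps power2_eq_square)
    also have "\<dots> = - L" unfolding s2 using Kpos by simp
    also have "exp (- L) = \<delta>" unfolding L_def using d0 by (simp add: ln_div exp_minus)
    finally show ?thesis .
  qed
  have "measure ?M (space ?M - {x \<in> space ?M. ?S x < a}) = 1 - measure ?M {x \<in> space ?M. ?S x < a}"
    by (rule P.prob_compl[OF Aset])
  then show "1 - \<delta> \<le> measure ?M {x \<in> space ?M. (\<Sum>t<T. (\<Sum>p\<in>svec_idx d. v p * svec (outer (x t)) p)\<^sup>2)
           \<ge> 2 * real T - sqrt (4000 * real T * (real d)\<^sup>2 * ln (1 / \<delta>))}"
    unfolding goal_eq using bound by simp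
qed


end
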